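(* Let $(M,F)$ be a Finsler $m$-manifold with finite uniform constant $\Lambda_F$, and let $d\mu$ be either the Busemann–Hausdorff volume form or the Holmes–Thompson volume form on $M$. Then the distortion $\tau$ of $d\mu$ satisfies $e^{-\tau(y)}\leq\Lambda_F^m$ for all $y\in SM$.
   Context: $g_y$ is the fundamental tensor with components $g_{ij}(x,y)$; $SM=\{(x,y):F(x,y)=1\}$; $\Lambda_F=\sup\{g_X(Y,Y)/g_Z(Y,Y):X,Y,Z\in S_xM,\ x\in M\}$. For $d\mu=\sigma(x)dx^1\wedge\cdots\wedge dx^m$, the distortion is $\tau(y)=\log\big(\sqrt{\det g_{ij}(x,y)}/\sigma(x)\big)$. Busemann–Hausdorff: $\sigma_{BH}(x)=\mathrm{vol}(\mathbb B^m)/\mathrm{vol}\{y\in T_xM:F(x,y)<1\}$; Holmes–Thompson: $\sigma_{HT}(x)=\frac{1}{\mathrm{vol}(\mathbb B^m)}\int_{\{F(x,y)<1\}}\det g_{ij}(x,y)\,dy^1\cdots dy^m$ (Euclidean volumes in the coordinates $y^i$). *)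

theory Defs
  imports "HOL-Analysis.Analysis"
begin

text \<open>Tangent spaces are identified with real^'m via coordinates y^i; m = CARD('m).\<close>

text \<open>C-infinity on a set S: all iterated partial derivatives exist (hence are continuous).\<close>
definition smooth_on_R :: "(real^'m) set \<Rightarrow> (real^'m \<Rightarrow> real) \<Rightarrow> bool" where
  "smooth_on_R S f \<longleftrightarrow>
     (\<exists>D :: 'm list \<Rightarrow> real^'m \<Rightarrow> real. D [] = f \<and>
        (\<forall>ks. \<forall>y\<in>S. (D ks has_derivative (\<lambda>h. \<Sum>i\<in>UNIV. D (i # ks) y * h $ i)) (at y)))"

definition grad_E :: "(real^'m \<Rightarrow> real) \<Rightarrow> real^'m \<Rightarrow> real^'m" where
  "grad_E F y = (\<chi> i. frechet_derivative (\<lambda>z. (F z)^2 / 2) (at y) (axis i 1))"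

definition fund_tensor :: "(real^'m \<Rightarrow> real) \<Rightarrow> real^'m \<Rightarrow> real^'m^'m" where
  "fund_tensor F y = (\<chi> i j. frechet_derivative (\<lambda>z. grad_E F z $ i) (at y) (axis j 1))"

definition minkowski_norm :: "(real^'m \<Rightarrow> real) \<Rightarrow> bool" where
  "minkowski_norm F \<longleftrightarrow>
     smooth_on_R (- {0}) F \<and>
     F 0 = 0 \<and> (\<forall>y. y \<noteq> 0 \<longrightarrow> F y > 0) \<and>
     (\<forall>y (t::real). t > 0 \<longrightarrow> F (t *\<^sub>R y) = t * F y) \<and>
     (\<forall>y. y \<noteq> 0 \<longrightarrow> (\<forall>v. v \<noteq> 0 \<longrightarrow> v \<bullet> (fund_tensor F y *v v) > 0))"

definition finsler :: "('p \<Rightarrow> real^'m \<Rightarrow> real) \<Rightarrow> bool" where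
  "finsler F \<longleftrightarrow> (\<forall>x. minkowski_norm (F x))"

definition uniform_ratios :: "('p \<Rightarrow> real^'m \<Rightarrow> real) \<Rightarrow> real set" where
  "uniform_ratios F =
     {(Y \<bullet> (fund_tensor (F x) X *v Y)) / (Y \<bullet> (fund_tensor (F x) Z *v Y)) | x X Y Z.
        F x X = 1 \<and> F x Y = 1 \<and> F x Z = 1}"

definition uniform_constant :: "('p \<Rightarrow> real^'m \<Rightarrow> real) \<Rightarrow> real" where
  "uniform_constant F = Sup (uniform_ratios F)"

definition sigma_BH :: "('p \<Rightarrow> real^'m \<Rightarrow> real) \<Rightarrow> 'p \<Rightarrow> real" where
  "sigma_BH F x = measure lborel (ball (0::real^'m) 1) / measure lborel {y. F x y < 1}"

definition sigma_HT :: "('p \<Rightarrow> real^'m \<Rightarrow> real) \<Rightarrow> 'p \<Rightarrow> real" where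
  "sigma_HT F x = (1 / measure lborel (ball (0::real^'m) 1)) *
                  integral {y. F x y < 1} (\<lambda>y. det (fund_tensor (F x) y))"

definition distortion :: "('p \<Rightarrow> real) \<Rightarrow> ('p \<Rightarrow> real^'m \<Rightarrow> real) \<Rightarrow> 'p \<Rightarrow> real^'m \<Rightarrow> real" where
  "distortion \<sigma> F x y = ln (sqrt (det (fund_tensor (F x) y)) / \<sigma> x)"

end

theory Submission
  imports Defs
begin

typedef 'a wo = "UNIV :: 'a set" by auto

instance wo :: (finite) finite
proof
  have "(UNIV :: 'a wo set) = Abs_wo ` UNIV"
    by (metis Rep_wo_inverse surjI)
  moreover have "finite (range (Abs_wo :: 'a \<Rightarrow> 'a wo))" by simp
  ultimately show "finite (UNIV :: 'a wo set)" by simp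
qed

definition wo_idx :: "'a::finite wo \<Rightarrow> nat" where
  "wo_idx x = to_nat_on (UNIV::'a set) (Rep_wo x)"

lemma inj_wo_idx: "inj wo_idx"
proof -
  have c: "countable (UNIV::'a set)" by (rule countable_finite) simp
  show ?thesis unfolding wo_idx_def
    using inj_on_to_nat_on[OF c] Rep_wo_inject by (auto simp: inj_on_def)
qed

instantiation wo :: (finite) linorder
begin
definition less_eq_wo :: "'a wo \<Rightarrow> 'a wo \<Rightarrow> bool" where "less_eq_wo x y = (wo_idx x \<le> wo_idx y)"
definition less_wo :: "'a wo \<Rightarrow> 'a wo \<Rightarrow> bool" where "less_wo x y = (wo_idx x < wo_idx y)"
instance
  by standard (auto simp: less_eq_wo_def less_wo_def inj_wo_idx[THEN injD])
end

instance wo :: (finite) wellorder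
proof
  fix P :: "'a wo \<Rightarrow> bool" and a
  assume H: "\<And>x. (\<And>y. y < x \<Longrightarrow> P y) \<Longrightarrow> P x"
  show "P a"
    by (induct a rule: measure_induct_rule[where f=wo_idx]) (rule H, auto simp: less_wo_def)
qed



definition relab :: "real^'m^'m \<Rightarrow> real^('m::finite wo)^('m wo)" where
  "relab P = (\<chi> a b. P $ Rep_wo a $ Rep_wo b)"

definition phi :: "real^('m::finite wo) \<Rightarrow> real^'m" where
  "phi w = (\<chi> i. w $ Abs_wo i)"

definition psi :: "real^('m::finite) \<Rightarrow> real^('m wo)" where
  "psi v = (\<chi> a. v $ Rep_wo a)"

lemma phi_psi[simp]: "phi (psi v) = v"
  by (simp add: phi_def psi_def Abs_wo_inverse vec_eq_iff)

lemma psi_phi[simp]: "psi (phi w) = w"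
  by (simp add: phi_def psi_def Rep_wo_inverse vec_eq_iff)

lemma bij_Rep_wo: "bij_betw Rep_wo UNIV UNIV"
  by (metis Rep_wo_inject Rep_wo_inverse Abs_wo_inverse UNIV_I bij_betw_def inj_onI surjI)

lemma bij_Abs_wo: "bij_betw Abs_wo UNIV UNIV"
  by (metis Abs_wo_inverse Rep_wo_inverse UNIV_I bij_betw_byWitness subset_UNIV)

lemma sum_wo: "(\<Sum>a\<in>UNIV. g (Rep_wo a)) = (\<Sum>i\<in>UNIV. g i)"
  using sum.reindex_bij_betw[OF bij_Rep_wo] .

lemma prod_wo: "(\<Prod>a\<in>UNIV. g (Rep_wo a)) = (\<Prod>i\<in>UNIV. g i)"
  using prod.reindex_bij_betw[OF bij_Rep_wo] .

lemma norm_psi[simp]: "norm (psi v) = norm v"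
  unfolding norm_vec_def L2_set_def psi_def
  using sum_wo[where g="\<lambda>i. (v $ i)\<^sup>2"] by simp

lemma norm_phi[simp]: "norm (phi w) = norm w"
  by (metis norm_psi psi_phi)

lemma phi_relab: "phi (relab P *v w) = P *v phi w"
proof -
  have "(\<Sum>a\<in>UNIV. P $ i $ Rep_wo a * w $ a) = (\<Sum>j\<in>UNIV. P $ i $ j * w $ Abs_wo j)" for i
    using sum_wo[where g="\<lambda>j. P $ i $ j * w $ Abs_wo j"] by (simp add: Rep_wo_inverse)
  then show ?thesis
    by (simp add: phi_def relab_def matrix_vector_mult_def vec_eq_iff Abs_wo_inverse)
qed

lemma det_relab: "det (relab P) = det P"
proof -
  let ?S = "{q. q permutes (UNIV :: 'a wo set)}"
  let ?T = "{p. p permutes (UNIV :: 'a set)}"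
  define h where "h q = (\<lambda>x. Rep_wo (q (Abs_wo x)))" for q :: "'a wo \<Rightarrow> 'a wo"
  define h' where "h' p = (\<lambda>a. Abs_wo (p (Rep_wo a)))" for p :: "'a \<Rightarrow> 'a"
  have pb: "permutes_bij_finite q UNIV UNIV Rep_wo Abs_wo" if "q permutes UNIV" for q :: "'a wo \<Rightarrow> 'a wo"
    using that bij_Rep_wo by unfold_locales (auto simp: Rep_wo_inverse)
  have hq: "(\<lambda>x. if x \<in> UNIV then Rep_wo (q (Abs_wo x)) else x) = h q" for q
    by (simp add: h_def)
  have pb2: "permutes_bij_finite p UNIV UNIV Abs_wo Rep_wo" if "p permutes UNIV" for p :: "'a \<Rightarrow> 'a"
    using that bij_Abs_wo by unfold_locales (auto simp: Abs_wo_inverse)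
  have hp: "(\<lambda>x. if x \<in> UNIV then Abs_wo (p (Rep_wo x)) else x) = h' p" for p
    by (simp add: h'_def)
  have bij: "bij_betw h ?S ?T"
  proof (rule bij_betw_byWitness[where f'=h'])
    show "\<forall>a\<in>?S. h' (h a) = a" by (auto simp: h_def h'_def Rep_wo_inverse Abs_wo_inverse)
    show "\<forall>a\<in>?T. h (h' a) = a" by (auto simp: h_def h'_def Rep_wo_inverse Abs_wo_inverse)
    show "h ` ?S \<subseteq> ?T" using permutes_bij.permutes_p'[OF permutes_bij_finite.axioms(1)[OF pb]] hq by auto
    show "h' ` ?T \<subseteq> ?S" using permutes_bij.permutes_p'[OF permutes_bij_finite.axioms(1)[OF pb2]] hp by auto
  qed
  have "det P = (\<Sum>q\<in>?S. of_int (sign (h q)) * (\<Prod>i\<in>UNIV. P $ i $ h q i))"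
    unfolding det_def using sum.reindex_bij_betw[OF bij, where g="\<lambda>p. of_int (sign p) * (\<Prod>i\<in>UNIV. P $ i $ p i)"]
    by simp
  also have "\<dots> = (\<Sum>q\<in>?S. of_int (sign q) * (\<Prod>a\<in>UNIV. relab P $ a $ q a))"
  proof (rule sum.cong[OF refl])
    fix q assume q: "q \<in> ?S"
    have "sign (h q) = sign q"
      using permutes_bij_finite.sign_p'[OF pb] q hq by auto
    moreover have "(\<Prod>i\<in>UNIV. P $ i $ h q i) = (\<Prod>a\<in>UNIV. relab P $ a $ q a)"
      using prod_wo[where g="\<lambda>i. P $ i $ h q i"] by (simp add: relab_def h_def Rep_wo_inverse)
    ultimately show "of_int (sign (h q)) * (\<Prod>i\<in>UNIV. P $ i $ h q i) = of_int (sign q) * (\<Prod>a\<in>UNIV. relab P $ a $ q a)"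
      by simp
  qed
  also have "\<dots> = det (relab P)" unfolding det_def ..
  finally show ?thesis by simp
qed



lemma Basis_cart_image: "(Basis :: (real^'n) set) = (\<lambda>i. axis i 1) ` UNIV"
  by (auto simp: Basis_vec_def)

lemma prod_Basis_cart: "(\<Prod>b\<in>(Basis :: (real^'n) set). x \<bullet> b) = (\<Prod>i\<in>UNIV. x $ i)"
proof -
  have "inj (\<lambda>i::'n. axis i (1::real))" by (auto simp: inj_on_def axis_eq_axis)
  then show ?thesis unfolding Basis_cart_image
    by (subst prod.reindex) (auto simp: inner_axis)
qed

lemma linear_phi: "linear phi"
  by (auto simp: linear_iff phi_def vec_eq_iff)

lemma phi_meas: "phi \<in> borel_measurable borel"
  by (intro borel_measurable_continuous_onI linear_continuous_on) (simp add: linear_conv_bounded_linear[symmetric] linear_phi)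

lemma distr_phi: "distr lborel borel (phi :: real^('m::finite wo) \<Rightarrow> real^'m) = lborel"
proof (rule lborel_eqI[symmetric])
  fix l u :: "real^'m"
  assume le: "\<And>b. b \<in> Basis \<Longrightarrow> l \<bullet> b \<le> u \<bullet> b"
  have lei: "l $ i \<le> u $ i" for i using le[of "axis i 1"] by (auto simp: Basis_vec_def inner_axis)
  have pre: "phi -` box l u = box (psi l) (psi u)"
    by (auto simp: mem_box_cart phi_def psi_def Abs_wo_inverse)
       (metis Rep_wo_inverse Abs_wo_inverse UNIV_I)+
  have "emeasure (distr lborel borel phi) (box l u) = emeasure lborel (phi -` box l u)"
  proof -
    have m: "phi \<in> measurable lborel borel" using phi_meas by simp
    show ?thesis using emeasure_distr[OF m, of "box l u"] by simp
  qed
  also have "\<dots> = (\<Prod>b\<in>Basis. (psi u - psi l) \<bullet> b)"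
    unfolding pre
    by (rule emeasure_lborel_box) (auto simp: Basis_vec_def inner_axis psi_def lei)
  also have "\<dots> = (\<Prod>a\<in>UNIV. u $ Rep_wo a - l $ Rep_wo a)"
    by (simp add: prod_Basis_cart psi_def)
  also have "\<dots> = (\<Prod>i\<in>UNIV. u $ i - l $ i)"
    using prod_wo[where g="\<lambda>i. u $ i - l $ i"] by simp
  also have "\<dots> = (\<Prod>b\<in>Basis. (u - l) \<bullet> b)"
    by (simp add: prod_Basis_cart)
  finally show "emeasure (distr lborel borel phi) (box l u) = (\<Prod>b\<in>Basis. (u - l) \<bullet> b)" .
qed simp

lemma card_wo: "CARD('m::finite wo) = CARD('m)"
  using bij_betw_same_card[OF bij_Rep_wo] by simp

lemma content_ball_wo: "measure lborel (ball (0::real^('m::finite wo)) r) = measure lborel (ball (0::real^'m) r)"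
proof (cases "r \<ge> 0")
  case True
  then show ?thesis by (simp add: content_ball card_wo)
next
  case False
  then show ?thesis by (simp add: ball_empty)
qed

lemma LI:
  fixes P :: "real^'m::finite^'m"
  assumes inv: "invertible P" and r: "r > 0"
  shows "(\<lambda>w. P *v w) ` ball 0 r \<in> sets borel"
    and "bounded ((\<lambda>w. P *v w) ` ball 0 r)"
    and "measure lborel ((\<lambda>w. P *v w) ` ball 0 r) = \<bar>det P\<bar> * measure lborel (ball (0::real^'m) r)"
proof -
  let ?I = "(\<lambda>w. P *v w) ` ball 0 r"
  have surjP: "surj (\<lambda>w. P *v w)"
    using inv by (metis invertible_def matrix_right_invertible_surjective)
  show op: "?I \<in> sets borel"
    by (intro borel_open open_surjective_linear_image surjP) auto
  show "bounded ?I"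
    by (intro bounded_linear_image) (auto simp: linear_conv_bounded_linear[symmetric])
  let ?Q = "relab P"
  have invQ: "invertible ?Q" using inv by (simp add: invertible_det_nz det_relab)
  have surjQ: "surj (\<lambda>w. ?Q *v w)"
    using invQ by (metis invertible_def matrix_right_invertible_surjective)
  have pre: "phi -` ?I = (\<lambda>w. ?Q *v w) ` ball 0 r"
  proof (rule set_eqI, rule iffI)
    fix w assume "w \<in> phi -` ?I"
    then obtain u where u: "norm u < r" "phi w = P *v u" by auto
    have "phi (?Q *v psi u) = phi w" using u by (simp add: phi_relab)
    then have "w = ?Q *v psi u" by (metis psi_phi)
    then show "w \<in> (\<lambda>w. ?Q *v w) ` ball 0 r" using u by auto
  next
    fix w assume "w \<in> (\<lambda>w. ?Q *v w) ` ball 0 r"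
    then obtain u where u: "norm u < r" "w = ?Q *v u" by auto
    then have "phi w = P *v phi u" by (simp add: phi_relab)
    then show "w \<in> phi -` ?I" using u by auto
  qed
  have opQ: "(\<lambda>w. ?Q *v w) ` ball 0 r \<in> sets borel"
    by (intro borel_open open_surjective_linear_image surjQ) auto
  have "measure lborel ?I = measure (distr lborel borel phi) ?I"
    by (simp add: distr_phi)
  also have "\<dots> = measure lborel ((\<lambda>w. ?Q *v w) ` ball 0 r)"
  proof -
    have m: "phi \<in> measurable lborel borel" using phi_meas by simp
    show ?thesis using measure_distr[OF m op] by (simp add: pre)
  qed
  also have "\<dots> = measure lebesgue ((\<lambda>w. ?Q *v w) ` ball 0 r)"
    using opQ by simp
  also have "\<dots> = \<bar>det ?Q\<bar> * measure lebesgue (ball (0::real^('m wo)) r)"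
    by (subst measure_linear_image) auto
  also have "\<dots> = \<bar>det P\<bar> * measure lborel (ball (0::real^'m) r)"
    by (simp add: det_relab content_ball_wo)
  finally show "measure lborel ?I = \<bar>det P\<bar> * measure lborel (ball (0::real^'m) r)" .
qed



lemma sym_form:
  fixes S :: "real^'n^'n"
  assumes "transpose S = S"
  shows "x \<bullet> (S *v y) = (S *v x) \<bullet> y"
proof -
  have "x \<bullet> (S *v y) = (x v* S) \<bullet> y" by (simp add: dot_lmul_matrix)
  also have "x v* S = transpose S *v x" by simp
  finally show ?thesis using assms by simp
qed

lemma GS_nat:
  fixes S :: "real^'n^'n"
  assumes sym: "transpose S = S" and pd: "\<And>v. v \<noteq> 0 \<Longrightarrow> v \<bullet> (S *v v) > 0"
  shows "k \<le> CARD('n) \<Longrightarrow> \<exists>e::nat \<Rightarrow> real^'n. \<forall>i<k. \<forall>j<k. e i \<bullet> (S *v e j) = (if i = j then 1 else 0)"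
proof (induction k)
  case 0 then show ?case by simp
next
  case (Suc k)
  then obtain e :: "nat \<Rightarrow> real^'n" where e: "\<forall>i<k. \<forall>j<k. e i \<bullet> (S *v e j) = (if i = j then 1 else 0)"
    by auto
  let ?B = "(\<lambda>i. S *v e i) ` {..<k}"
  have "dim ?B \<le> card ?B" by (rule dim_le_card) (auto intro: span_base)
  also have "\<dots> \<le> k" using card_image_le[of "{..<k}" "\<lambda>i. S *v e i"] by simp
  also have "k < DIM(real^'n)" using Suc.prems by simp
  finally obtain w where w: "w \<noteq> 0" "\<And>y. y \<in> span ?B \<Longrightarrow> orthogonal w y"
    using orthogonal_to_subspace_exists by blast
  have wo: "w \<bullet> (S *v e i) = 0" if "i < k" for i
    using w(2)[of "S *v e i"] that by (auto simp: orthogonal_def intro: span_base)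
  define \<alpha> where "\<alpha> = w \<bullet> (S *v w)"
  have \<alpha>: "\<alpha> > 0" using pd w(1) by (simp add: \<alpha>_def)
  define e' where "e' = e(k := (1 / sqrt \<alpha>) *\<^sub>R w)"
  have "\<forall>i<Suc k. \<forall>j<Suc k. e' i \<bullet> (S *v e' j) = (if i = j then 1 else 0)"
  proof (intro allI impI)
    fix i j assume i: "i < Suc k" and j: "j < Suc k"
    consider "i < k" "j < k" | "i < k" "j = k" | "i = k" "j < k" | "i = k" "j = k"
      using i j by linarith
    then show "e' i \<bullet> (S *v e' j) = (if i = j then 1 else 0)"
    proof cases
      case 1 then show ?thesis using e by (simp add: e'_def)
    next
      case 2
      have "e i \<bullet> (S *v w) = 0" using wo[OF 2(1)] sym_form[OF sym, of "e i" w] by (simp add: inner_commute)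
      then show ?thesis using 2 by (simp add: e'_def matrix_vector_mult_scaleR)
    next
      case 3
      then show ?thesis using wo[OF 3(2)] by (simp add: e'_def)
    next
      case 4
      have "((1 / sqrt \<alpha>) *\<^sub>R w) \<bullet> (S *v ((1 / sqrt \<alpha>) *\<^sub>R w)) = (1 / sqrt \<alpha>) * (1 / sqrt \<alpha>) * \<alpha>"
        by (simp add: matrix_vector_mult_scaleR \<alpha>_def)
      also have "\<dots> = 1" using \<alpha> by (simp add: field_simps)
      finally show ?thesis using 4 by (simp add: e'_def)
    qed
  qed
  then show ?case by blast
qed

lemma GS:
  fixes S :: "real^'n^'n"
  assumes sym: "transpose S = S" and pd: "\<And>v. v \<noteq> 0 \<Longrightarrow> v \<bullet> (S *v v) > 0"
  obtains E :: "'n \<Rightarrow> real^'n" where "\<And>a b. E a \<bullet> (S *v E b) = (if a = b then 1 else 0)"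
proof -
  obtain e :: "nat \<Rightarrow> real^'n" where e: "\<forall>i<CARD('n). \<forall>j<CARD('n). e i \<bullet> (S *v e j) = (if i = j then 1 else 0)"
    using GS_nat[OF sym pd, of "CARD('n)"] by auto
  obtain h :: "'n \<Rightarrow> nat" where h: "bij_betw h UNIV {0..<CARD('n)}"
    using ex_bij_betw_finite_nat[of "UNIV :: 'n set"] by auto
  have hlt: "h a < CARD('n)" for a using h by (auto simp: bij_betw_def)
  have hinj: "h a = h b \<longleftrightarrow> a = b" for a b using h by (auto simp: bij_betw_def inj_on_def)
  show ?thesis
    by (rule that[of "\<lambda>a. e (h a)"]) (simp add: e hlt hinj)
qed

lemma ellipsoid:
  fixes S :: "real^'n::finite^'n"
  assumes sym: "transpose S = S" and pd: "\<And>v. v \<noteq> 0 \<Longrightarrow> v \<bullet> (S *v v) > 0" and c: "c > 0"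
  shows "det S > 0"
    and "{v. v \<bullet> (S *v v) < c} \<in> sets borel"
    and "bounded {v. v \<bullet> (S *v v) < c}"
    and "measure lborel {v. v \<bullet> (S *v v) < c} = measure lborel (ball (0::real^'n) 1) * sqrt c ^ CARD('n) / sqrt (det S)"
proof -
  obtain E :: "'n \<Rightarrow> real^'n" where E: "\<And>a b. E a \<bullet> (S *v E b) = (if a = b then 1 else 0)"
    using GS[OF sym pd] by blast
  define P :: "real^'n^'n" where "P = (\<chi> r c. E c $ r)"
  have PtSP: "transpose P ** S ** P = mat 1"
  proof -
    have "(transpose P ** S ** P) $ a $ b = E a \<bullet> (S *v E b)" for a b
    proof -
      have "(transpose P ** S ** P) $ a $ b = (\<Sum>k\<in>UNIV. (\<Sum>r\<in>UNIV. E a $ r * S $ r $ k) * E b $ k)"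
        by (simp add: matrix_matrix_mult_def transpose_def P_def)
      also have "\<dots> = (\<Sum>k\<in>UNIV. \<Sum>r\<in>UNIV. E a $ r * S $ r $ k * E b $ k)"
        by (simp add: sum_distrib_right)
      also have "\<dots> = (\<Sum>r\<in>UNIV. \<Sum>k\<in>UNIV. E a $ r * S $ r $ k * E b $ k)"
        by (rule sum.swap)
      also have "\<dots> = E a \<bullet> (S *v E b)"
        by (simp add: inner_vec_def matrix_vector_mult_def sum_distrib_left mult.assoc)
      finally show ?thesis .
    qed
    then show ?thesis by (simp add: vec_eq_iff E mat_def)
  qed
  have quad: "(P *v w) \<bullet> (S *v (P *v w)) = w \<bullet> w" for w
  proof -
    have "P *v w = w v* transpose P" by (metis transpose_matrix_vector transpose_transpose)
    then have "(P *v w) \<bullet> (S *v (P *v w)) = w \<bullet> (transpose P *v (S *v (P *v w)))"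
      by (metis dot_lmul_matrix)
    also have "\<dots> = w \<bullet> ((transpose P ** S ** P) *v w)" by (simp only: matrix_vector_mul_assoc matrix_mul_assoc)
    finally show ?thesis by (simp add: PtSP)
  qed
  have L: "(transpose P ** S) ** P = mat 1" using PtSP by simp
  then have R: "P ** (transpose P ** S) = mat 1" using matrix_left_right_inverse by blast
  have invP: "invertible P" using L invertible_left_inverse by blast
  have detP: "det P \<noteq> 0" using invP invertible_det_nz by blast
  have "det (transpose P ** S ** P) = 1" using PtSP by simp
  then have dd: "det P * det P * det S = 1" by (simp add: det_mul mult_ac)
  then show dpos: "det S > 0"
    by (metis detP mult_pos_pos not_less_iff_gr_or_eq zero_less_mult_iff zero_less_one)
  have eqset: "{v. v \<bullet> (S *v v) < c} = (\<lambda>w. P *v w) ` ball 0 (sqrt c)"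
  proof (rule set_eqI, rule iffI)
    fix v assume v: "v \<in> {v. v \<bullet> (S *v v) < c}"
    define w where "w = (transpose P ** S) *v v"
    have vw: "v = P *v w" by (simp add: w_def matrix_vector_mul_assoc R)
    have "norm w ^ 2 < c" using v quad[of w] vw by (simp add: power2_norm_eq_inner)
    then have "norm w < sqrt c" using real_less_rsqrt by blast
    then show "v \<in> (\<lambda>w. P *v w) ` ball 0 (sqrt c)" using vw by auto
  next
    fix v assume "v \<in> (\<lambda>w. P *v w) ` ball 0 (sqrt c)"
    then obtain w where w: "norm w < sqrt c" "v = P *v w" by auto
    have "norm w ^ 2 < c" using w(1) c
      by (metis norm_ge_zero power_strict_mono real_sqrt_pow2 zero_less_numeral less_imp_le)
    then show "v \<in> {v. v \<bullet> (S *v v) < c}" using w quad[of w] by (simp add: power2_norm_eq_inner)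
  qed
  show "{v. v \<bullet> (S *v v) < c} \<in> sets borel" "bounded {v. v \<bullet> (S *v v) < c}"
    unfolding eqset using LI[OF invP] c by auto
  have "measure lborel {v. v \<bullet> (S *v v) < c} = \<bar>det P\<bar> * measure lborel (ball (0::real^'n) (sqrt c))"
    unfolding eqset using LI[OF invP] c by auto
  also have "measure lborel (ball (0::real^'n) (sqrt c)) = sqrt c ^ CARD('n) * measure lborel (ball (0::real^'n) 1)"
    using content_ball_conv_unit_ball[of "sqrt c" "0::real^'n"] c by simp
  also have "\<bar>det P\<bar> = 1 / sqrt (det S)"
  proof -
    have "\<bar>det P\<bar> ^ 2 = 1 / det S" using dd dpos by (simp add: field_simps power2_eq_square)
    then have "\<bar>det P\<bar> = sqrt (1 / det S)" by (metis abs_ge_zero real_sqrt_abs real_sqrt_unique)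
    then show ?thesis by (simp add: real_sqrt_divide)
  qed
  finally show "measure lborel {v. v \<bullet> (S *v v) < c} = measure lborel (ball (0::real^'n) 1) * sqrt c ^ CARD('n) / sqrt (det S)"
    by simp
qed



lemma sum_axis_mult[simp]: "(\<Sum>k\<in>UNIV. G k * (axis i (1::real)) $ k) = G i"
  by (simp add: axis_def if_distrib sum.delta cong: if_cong)

lemma sum_axis_scale: "(\<Sum>k\<in>UNIV. G k * (h *\<^sub>R axis i (1::real)) $ k) = h * G i"
  by (simp add: axis_def if_distrib sum.delta cong: if_cong)

lemma deriv_line:
  fixes g :: "real^'m \<Rightarrow> real"
  assumes "(g has_derivative (\<lambda>h. \<Sum>k\<in>UNIV. G k * h $ k)) (at (a + s *\<^sub>R axis i 1))"
  shows "((\<lambda>s. g (a + s *\<^sub>R axis i 1)) has_real_derivative G i) (at s)"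
proof -
  have l: "((\<lambda>s. a + s *\<^sub>R axis i (1::real)) has_derivative (\<lambda>h. h *\<^sub>R axis i 1)) (at s)"
    by (auto intro!: derivative_eq_intros)
  have "((\<lambda>s. g (a + s *\<^sub>R axis i 1)) has_derivative (\<lambda>h. \<Sum>k\<in>UNIV. G k * (h *\<^sub>R axis i 1) $ k)) (at s)"
    using has_derivative_compose[OF l assms] by (simp add: o_def)
  moreover have "(\<lambda>h. \<Sum>k\<in>UNIV. G k * (h *\<^sub>R axis i 1) $ k) = (*) (G i)"
    by (rule ext) (simp only: sum_axis_scale mult.commute)
  ultimately show ?thesis
    by (simp only: has_field_derivative_def)
qed



lemma pt_in:
  fixes y :: "real^'m"
  assumes "cball y (2*h) \<subseteq> U" "0 \<le> s" "s \<le> h" "0 \<le> t" "t \<le> h"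
  shows "y + s *\<^sub>R axis i 1 + t *\<^sub>R axis j 1 \<in> U"
proof -
  have "norm (s *\<^sub>R axis i (1::real) + t *\<^sub>R axis j 1) \<le> norm (s *\<^sub>R axis i (1::real)) + norm (t *\<^sub>R axis j (1::real))"
    by (rule norm_triangle_ineq)
  also have "\<dots> = s + t" using assms by (simp add: norm_axis_1)
  finally have "dist (y + s *\<^sub>R axis i 1 + t *\<^sub>R axis j 1) y \<le> 2*h"
    using assms by (simp add: dist_norm add.assoc)
  then show ?thesis using assms(1) by (auto simp: dist_commute)
qed

lemma delta_rep:
  fixes g :: "real^'m \<Rightarrow> real"
  assumes sub: "cball y (2*h) \<subseteq> U" and h: "h > 0"
    and d1: "\<forall>z\<in>U. (g has_derivative (\<lambda>v. \<Sum>k\<in>UNIV. g1 k z * v $ k)) (at z)"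
    and d2: "\<forall>z\<in>U. (g1 i has_derivative (\<lambda>v. \<Sum>k\<in>UNIV. g2 k i z * v $ k)) (at z)"
  shows "\<exists>p. dist p y \<le> 2*h \<and>
     g (y + h *\<^sub>R axis i 1 + h *\<^sub>R axis j 1) - g (y + h *\<^sub>R axis i 1) - g (y + h *\<^sub>R axis j 1) + g y
       = h * h * g2 j i p"
proof -
  let ?ei = "axis i (1::real)" and ?ej = "axis j (1::real)"
  define \<phi> where "\<phi> s = g ((y + h *\<^sub>R ?ej) + s *\<^sub>R ?ei) - g (y + s *\<^sub>R ?ei)" for s
  have dphi: "DERIV \<phi> s :> (g1 i ((y + h *\<^sub>R ?ej) + s *\<^sub>R ?ei) - g1 i (y + s *\<^sub>R ?ei))"
    if "0 \<le> s" "s \<le> h" for s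
  proof -
    have in1: "(y + h *\<^sub>R ?ej) + s *\<^sub>R ?ei \<in> U"
      using pt_in[OF sub, of s h i j] that h by (simp add: add_ac)
    have in2: "y + s *\<^sub>R ?ei \<in> U"
      using pt_in[OF sub, of s 0 i j] that h by simp
    show ?thesis unfolding \<phi>_def
      by (intro DERIV_diff deriv_line) (use d1 in1 in2 in auto)
  qed
  obtain \<xi> where \<xi>: "0 < \<xi>" "\<xi> < h" "\<phi> h - \<phi> 0 = (h - 0) * (g1 i ((y + h *\<^sub>R ?ej) + \<xi> *\<^sub>R ?ei) - g1 i (y + \<xi> *\<^sub>R ?ei))"
    using MVT2[OF h, of \<phi> "\<lambda>s. g1 i ((y + h *\<^sub>R ?ej) + s *\<^sub>R ?ei) - g1 i (y + s *\<^sub>R ?ei)"] dphi by auto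
  define \<psi> where "\<psi> t = g1 i ((y + \<xi> *\<^sub>R ?ei) + t *\<^sub>R ?ej)" for t
  have dpsi: "DERIV \<psi> t :> g2 j i ((y + \<xi> *\<^sub>R ?ei) + t *\<^sub>R ?ej)" if "0 \<le> t" "t \<le> h" for t
  proof -
    have "(y + \<xi> *\<^sub>R ?ei) + t *\<^sub>R ?ej \<in> U"
      using pt_in[OF sub, of \<xi> t i j] that \<xi> by simp
    then show ?thesis unfolding \<psi>_def
      by (intro deriv_line) (use d2 in auto)
  qed
  obtain \<eta> where \<eta>: "0 < \<eta>" "\<eta> < h" "\<psi> h - \<psi> 0 = (h - 0) * g2 j i ((y + \<xi> *\<^sub>R ?ei) + \<eta> *\<^sub>R ?ej)"
    using MVT2[OF h, of \<psi> "\<lambda>t. g2 j i ((y + \<xi> *\<^sub>R ?ei) + t *\<^sub>R ?ej)"] dpsi by auto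
  define p where "p = (y + \<xi> *\<^sub>R ?ei) + \<eta> *\<^sub>R ?ej"
  have "p \<in> cball y (2*h) \<or> True" by simp
  have "norm (\<xi> *\<^sub>R ?ei + \<eta> *\<^sub>R ?ej) \<le> norm (\<xi> *\<^sub>R ?ei) + norm (\<eta> *\<^sub>R ?ej)"
    by (rule norm_triangle_ineq)
  also have "\<dots> \<le> 2*h" using \<xi> \<eta> by (simp add: norm_axis_1)
  finally have dp: "dist p y \<le> 2*h" by (simp add: p_def dist_norm add.assoc)
  have e1: "(y + h *\<^sub>R ?ej) + \<xi> *\<^sub>R ?ei = (y + \<xi> *\<^sub>R ?ei) + h *\<^sub>R ?ej" by (simp add: add_ac)
  have "\<phi> h - \<phi> 0 = h * (\<psi> h - \<psi> 0)"
    using \<xi>(3) by (simp add: \<psi>_def e1)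
  also have "\<dots> = h * h * g2 j i p" using \<eta>(3) by (simp add: p_def)
  finally have "\<phi> h - \<phi> 0 = h * h * g2 j i p" .
  moreover have "\<phi> h - \<phi> 0 = g (y + h *\<^sub>R ?ei + h *\<^sub>R ?ej) - g (y + h *\<^sub>R ?ei) - g (y + h *\<^sub>R ?ej) + g y"
    by (simp add: \<phi>_def add_ac)
  ultimately show ?thesis using dp by metis
qed

lemma schwarz:
  fixes g :: "real^'m \<Rightarrow> real"
  assumes U: "open U" "y \<in> U"
    and d1: "\<forall>z\<in>U. (g has_derivative (\<lambda>v. \<Sum>k\<in>UNIV. g1 k z * v $ k)) (at z)"
    and d2: "\<forall>i. \<forall>z\<in>U. (g1 i has_derivative (\<lambda>v. \<Sum>k\<in>UNIV. g2 k i z * v $ k)) (at z)"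
    and c2: "\<forall>i j. \<forall>z\<in>U. isCont (g2 j i) z"
  shows "g2 j i y = g2 i j y"
proof (rule ccontr)
  assume ne: "g2 j i y \<noteq> g2 i j y"
  define \<epsilon> where "\<epsilon> = \<bar>g2 j i y - g2 i j y\<bar> / 2"
  have \<epsilon>: "\<epsilon> > 0" using ne by (simp add: \<epsilon>_def)
  obtain \<delta>0 where \<delta>0: "\<delta>0 > 0" "cball y \<delta>0 \<subseteq> U" using U open_contains_cball by blast
  obtain \<delta>1 where \<delta>1: "\<delta>1 > 0" "\<And>p. dist p y < \<delta>1 \<Longrightarrow> dist (g2 j i p) (g2 j i y) < \<epsilon>"
    using c2 U(2) \<epsilon> unfolding continuous_at_eps_delta by meson
  obtain \<delta>2 where \<delta>2: "\<delta>2 > 0" "\<And>p. dist p y < \<delta>2 \<Longrightarrow> dist (g2 i j p) (g2 i j y) < \<epsilon>"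
    using c2 U(2) \<epsilon> unfolding continuous_at_eps_delta by meson
  define h where "h = min \<delta>0 (min \<delta>1 \<delta>2) / 4"
  have h: "h > 0" using \<delta>0 \<delta>1 \<delta>2 by (simp add: h_def)
  have "2*h \<le> \<delta>0" using \<delta>0 \<delta>1 \<delta>2 by (simp add: h_def)
  then have sub: "cball y (2*h) \<subseteq> U" using \<delta>0 subset_cball by blast
  obtain p1 where p1: "dist p1 y \<le> 2*h"
    "g (y + h *\<^sub>R axis i 1 + h *\<^sub>R axis j 1) - g (y + h *\<^sub>R axis i 1) - g (y + h *\<^sub>R axis j 1) + g y = h * h * g2 j i p1"
    using delta_rep[where g=g and ?g1.0=g1 and ?g2.0=g2 and i=i and j=j, OF sub h d1 d2[THEN spec[of _ i]]] by blast
  obtain p2 where p2: "dist p2 y \<le> 2*h"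
    "g (y + h *\<^sub>R axis j 1 + h *\<^sub>R axis i 1) - g (y + h *\<^sub>R axis j 1) - g (y + h *\<^sub>R axis i 1) + g y = h * h * g2 i j p2"
    using delta_rep[where g=g and ?g1.0=g1 and ?g2.0=g2 and i=j and j=i, OF sub h d1 d2[THEN spec[of _ j]]] by blast
  have "y + h *\<^sub>R axis j 1 + h *\<^sub>R axis i 1 = y + h *\<^sub>R axis i 1 + h *\<^sub>R axis j (1::real)" by (simp add: add_ac)
  then have "g (y + h *\<^sub>R axis j 1 + h *\<^sub>R axis i 1) = g (y + h *\<^sub>R axis i 1 + h *\<^sub>R axis j (1::real))" by (rule arg_cong[where f=g])
  then have "h * h * g2 j i p1 = h * h * g2 i j p2" using p1(2) p2(2) by linarith
  then have eq: "g2 j i p1 = g2 i j p2" using h by simp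
  have "dist p1 y < \<delta>1" "dist p2 y < \<delta>2" using p1(1) p2(1) h \<delta>1 \<delta>2 by (auto simp: h_def)
  then have "dist (g2 j i p1) (g2 j i y) < \<epsilon>" "dist (g2 i j p2) (g2 i j y) < \<epsilon>" using \<delta>1 \<delta>2 by auto
  then show False using eq by (simp add: dist_real_def \<epsilon>_def) (smt (verit, best) abs_triangle_ineq4)
qed



locale mink =
  fixes f :: "real^'m \<Rightarrow> real" and D :: "'m list \<Rightarrow> real^'m \<Rightarrow> real"
  assumes D0: "D [] = f"
    and DD: "\<And>ks y. y \<noteq> 0 \<Longrightarrow> (D ks has_derivative (\<lambda>h. \<Sum>i\<in>UNIV. D (i # ks) y * h $ i)) (at y)"
    and hom: "\<And>y t. t > 0 \<Longrightarrow> f (t *\<^sub>R y) = t * f y"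
begin

lemma df: "y \<noteq> 0 \<Longrightarrow> (f has_derivative (\<lambda>h. \<Sum>i\<in>UNIV. D [i] y * h $ i)) (at y)"
  using DD[of y "[]"] by (simp add: D0)

lemma open_N: "open (- {0 :: real^'m})" by (simp add: open_Compl)

lemma gradE: 
  assumes y: "y \<noteq> 0"
  shows "grad_E f y $ i = f y * D [i] y"
proof -
  have "((\<lambda>z. (f z)^2 / 2) has_derivative (\<lambda>h. (of_nat 2 * (\<Sum>k\<in>UNIV. D [k] y * h $ k) * f y^(2-1) * 2 - (f y)^2 * 0) / (2 * 2))) (at y)"
    by (rule has_derivative_divide'[OF has_derivative_power[OF df[OF y]] has_derivative_const]) simp
  then have "((\<lambda>z. (f z)^2 / 2) has_derivative (\<lambda>h. f y * (\<Sum>k\<in>UNIV. D [k] y * h $ k))) (at y)"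
    by (rule has_derivative_eq_rhs) (simp add: fun_eq_iff)
  then have "frechet_derivative (\<lambda>z. (f z)^2 / 2) (at y) = (\<lambda>h. f y * (\<Sum>k\<in>UNIV. D [k] y * h $ k))"
    by (rule frechet_derivative_at[symmetric])
  then show ?thesis by (simp add: grad_E_def)
qed

lemma fund:
  assumes y: "y \<noteq> 0"
  shows "fund_tensor f y $ i $ j = D [j] y * D [i] y + f y * D [j, i] y"
proof -
  have "((\<lambda>z. f z * D [i] z) has_derivative
     (\<lambda>h. f y * (\<Sum>k\<in>UNIV. D [k, i] y * h $ k) + (\<Sum>k\<in>UNIV. D [k] y * h $ k) * D [i] y)) (at y)"
    using has_derivative_mult[OF df[OF y] DD[OF y, of "[i]"]] by simp
  then have "((\<lambda>z. grad_E f z $ i) has_derivative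
     (\<lambda>h. f y * (\<Sum>k\<in>UNIV. D [k, i] y * h $ k) + (\<Sum>k\<in>UNIV. D [k] y * h $ k) * D [i] y)) (at y)"
    by (rule has_derivative_transform_within_open[OF _ open_N]) (simp_all add: y gradE)
  then have "frechet_derivative (\<lambda>z. grad_E f z $ i) (at y) =
     (\<lambda>h. f y * (\<Sum>k\<in>UNIV. D [k, i] y * h $ k) + (\<Sum>k\<in>UNIV. D [k] y * h $ k) * D [i] y)"
    by (rule frechet_derivative_at[symmetric])
  then show ?thesis by (simp add: fund_tensor_def)
qed

lemma Dsym:
  assumes y: "y \<noteq> 0"
  shows "D [j, i] y = D [i, j] y"
proof -
  have c: "isCont (D [j, i]) z" if "z \<noteq> 0" for i j z
    using DD[OF that, of "[j, i]"] has_derivative_continuous by blast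
  show ?thesis
    apply (rule schwarz[where U="- {0}" and g=f and ?g1.0="\<lambda>k. D [k]" and ?g2.0="\<lambda>k i. D [k, i]"])
    subgoal by (rule open_N)
    subgoal using y by simp
    subgoal using df by simp
    subgoal using DD by simp
    subgoal using c by simp
    done
qed

lemma fund_sym:
  assumes y: "y \<noteq> 0"
  shows "transpose (fund_tensor f y) = fund_tensor f y"
proof -
  have "fund_tensor f y $ j $ i = fund_tensor f y $ i $ j" for i j
    by (simp only: fund[OF y] Dsym[OF y, of i j] mult.commute)
  then show ?thesis by (simp add: vec_eq_iff transpose_def)
qed

lemma D1_hom:
  assumes y: "y \<noteq> 0" and t: "t > 0"
  shows "D [i] (t *\<^sub>R y) = D [i] y"
proof -
  have ty: "t *\<^sub>R y \<noteq> 0" using y t by simp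
  have l: "((\<lambda>w. t *\<^sub>R w) has_derivative (\<lambda>h. t *\<^sub>R h)) (at y)"
    by (rule has_derivative_scaleR_right[OF has_derivative_ident])
  have a: "((\<lambda>w. f (t *\<^sub>R w)) has_derivative (\<lambda>h. \<Sum>k\<in>UNIV. D [k] (t *\<^sub>R y) * (t *\<^sub>R h) $ k)) (at y)"
    using has_derivative_compose[OF l df[OF ty]] by (simp add: o_def)
  have "((\<lambda>w. t * f w) has_derivative (\<lambda>h. t * (\<Sum>k\<in>UNIV. D [k] y * h $ k))) (at y)"
    by (rule has_derivative_mult_right[OF df[OF y]])
  then have b: "((\<lambda>w. f (t *\<^sub>R w)) has_derivative (\<lambda>h. t * (\<Sum>k\<in>UNIV. D [k] y * h $ k))) (at y)"
    by (simp add: hom[OF t])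
  have "(\<lambda>h. \<Sum>k\<in>UNIV. D [k] (t *\<^sub>R y) * (t *\<^sub>R h) $ k) = (\<lambda>h. t * (\<Sum>k\<in>UNIV. D [k] y * h $ k))"
    by (rule has_derivative_unique[OF a b])
  from fun_cong[OF this, of "axis i 1"] have "(\<Sum>k\<in>UNIV. D [k] (t *\<^sub>R y) * (t *\<^sub>R axis i 1) $ k) = t * (\<Sum>k\<in>UNIV. D [k] y * axis i 1 $ k)"
    by (simp only:)
  then have "t * D [i] (t *\<^sub>R y) = t * D [i] y" by (simp only: sum_axis_scale sum_axis_mult)
  then show ?thesis using t by simp
qed

lemma D2_hom:
  assumes y: "y \<noteq> 0" and t: "t > 0"
  shows "t * D [j, i] (t *\<^sub>R y) = D [j, i] y"
proof -
  have ty: "t *\<^sub>R y \<noteq> 0" using y t by simp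
  have l: "((\<lambda>w. t *\<^sub>R w) has_derivative (\<lambda>h. t *\<^sub>R h)) (at y)"
    by (rule has_derivative_scaleR_right[OF has_derivative_ident])
  have a: "((\<lambda>w. D [i] (t *\<^sub>R w)) has_derivative (\<lambda>h. \<Sum>k\<in>UNIV. D [k, i] (t *\<^sub>R y) * (t *\<^sub>R h) $ k)) (at y)"
    using has_derivative_compose[OF l DD[OF ty, of "[i]"]] by (simp add: o_def)
  then have a': "(D [i] has_derivative (\<lambda>h. \<Sum>k\<in>UNIV. D [k, i] (t *\<^sub>R y) * (t *\<^sub>R h) $ k)) (at y)"
    by (rule has_derivative_transform_within_open[OF _ open_N]) (simp_all add: y D1_hom[OF _ t])
  have "(\<lambda>h. \<Sum>k\<in>UNIV. D [k, i] (t *\<^sub>R y) * (t *\<^sub>R h) $ k) = (\<lambda>h. \<Sum>k\<in>UNIV. D [k, i] y * h $ k)"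
    by (rule has_derivative_unique[OF a' DD[OF y, of "[i]"]])
  from fun_cong[OF this, of "axis j 1"] have "(\<Sum>k\<in>UNIV. D [k, i] (t *\<^sub>R y) * (t *\<^sub>R axis j 1) $ k) = (\<Sum>k\<in>UNIV. D [k, i] y * axis j 1 $ k)"
    by (simp only:)
  then show ?thesis by (simp only: sum_axis_scale sum_axis_mult)
qed

lemma euler1:
  assumes y: "y \<noteq> 0"
  shows "(\<Sum>k\<in>UNIV. D [k] y * y $ k) = f y"
proof -
  have l: "((\<lambda>t::real. t *\<^sub>R y) has_derivative (\<lambda>h. h *\<^sub>R y)) (at 1)"
    by (rule has_derivative_scaleR_left[OF has_derivative_ident])
  have a: "((\<lambda>t. f (t *\<^sub>R y)) has_derivative (\<lambda>h. \<Sum>k\<in>UNIV. D [k] y * (h *\<^sub>R y) $ k)) (at 1)"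
  proof -
    have df1: "(f has_derivative (\<lambda>h. \<Sum>i\<in>UNIV. D [i] y * h $ i)) (at ((\<lambda>t. t *\<^sub>R y) 1))"
      using df[OF y] by simp
    show ?thesis using has_derivative_compose[OF l df1] unfolding o_def .
  qed
  then have a': "((\<lambda>t. t * f y) has_derivative (\<lambda>h. \<Sum>k\<in>UNIV. D [k] y * (h *\<^sub>R y) $ k)) (at 1)"
    by (rule has_derivative_transform_within_open[where s="{0<..}"]) (simp_all add: hom)
  have b: "((\<lambda>t. t * f y) has_derivative (\<lambda>h. h * f y)) (at (1::real))"
    by (rule has_derivative_mult_left[OF has_derivative_ident])
  have "(\<lambda>h. \<Sum>k\<in>UNIV. D [k] y * (h *\<^sub>R y) $ k) = (\<lambda>h. h * f y)"
    by (rule has_derivative_unique[OF a' b])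
  from fun_cong[OF this, of 1] have "(\<Sum>k\<in>UNIV. D [k] y * ((1::real) *\<^sub>R y) $ k) = 1 * f y" by (simp only:)
  then show ?thesis by simp
qed

lemma euler2:
  assumes y: "y \<noteq> 0"
  shows "(\<Sum>k\<in>UNIV. D [k, i] y * y $ k) = 0"
proof -
  have l: "((\<lambda>t::real. t *\<^sub>R y) has_derivative (\<lambda>h. h *\<^sub>R y)) (at 1)"
    by (rule has_derivative_scaleR_left[OF has_derivative_ident])
  have a: "((\<lambda>t. D [i] (t *\<^sub>R y)) has_derivative (\<lambda>h. \<Sum>k\<in>UNIV. D [k, i] y * (h *\<^sub>R y) $ k)) (at 1)"
  proof -
    have df1: "(D [i] has_derivative (\<lambda>h. \<Sum>k\<in>UNIV. D [k, i] y * h $ k)) (at ((\<lambda>t. t *\<^sub>R y) 1))"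
      using DD[OF y, of "[i]"] by simp
    show ?thesis using has_derivative_compose[OF l df1] unfolding o_def .
  qed
  then have a': "((\<lambda>t. D [i] y) has_derivative (\<lambda>h. \<Sum>k\<in>UNIV. D [k, i] y * (h *\<^sub>R y) $ k)) (at 1)"
    by (rule has_derivative_transform_within_open[where s="{0<..}"]) (simp_all add: D1_hom y)
  have b: "((\<lambda>t::real. D [i] y) has_derivative (\<lambda>h. 0)) (at 1)"
    by (rule has_derivative_const)
  have "(\<lambda>h. \<Sum>k\<in>UNIV. D [k, i] y * (h *\<^sub>R y) $ k) = (\<lambda>h. 0)"
    by (rule has_derivative_unique[OF a' b])
  from fun_cong[OF this, of 1] have "(\<Sum>k\<in>UNIV. D [k, i] y * ((1::real) *\<^sub>R y) $ k) = 0" by (simp only:)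
  then show ?thesis by simp
qed

lemma fund_hom:
  assumes y: "y \<noteq> 0" and t: "t > 0"
  shows "fund_tensor f (t *\<^sub>R y) = fund_tensor f y"
proof -
  have ty: "t *\<^sub>R y \<noteq> 0" using y t by simp
  have "f (t *\<^sub>R y) * D [j, i] (t *\<^sub>R y) = f y * D [j, i] y" for i j
    using D2_hom[OF y t, of j i] by (simp add: hom[OF t] mult.assoc)
  then show ?thesis
    by (simp add: vec_eq_iff fund[OF ty] fund[OF y] D1_hom[OF y t])
qed

lemma fund_quad:
  assumes y: "y \<noteq> 0"
  shows "y \<bullet> (fund_tensor f y *v y) = (f y)^2"
proof -
  have row: "(\<Sum>j\<in>UNIV. fund_tensor f y $ i $ j * y $ j) = D [i] y * f y" for i
  proof -
    have "(\<Sum>j\<in>UNIV. fund_tensor f y $ i $ j * y $ j)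
        = D [i] y * (\<Sum>j\<in>UNIV. D [j] y * y $ j) + f y * (\<Sum>j\<in>UNIV. D [j, i] y * y $ j)"
      by (simp add: fund[OF y] algebra_simps sum.distrib sum_distrib_left)
    then show ?thesis by (simp add: euler1[OF y] euler2[OF y])
  qed
  have "y \<bullet> (fund_tensor f y *v y) = (\<Sum>i\<in>UNIV. y $ i * (D [i] y * f y))"
    by (simp add: inner_vec_def matrix_vector_mult_def row)
  also have "\<dots> = (\<Sum>i\<in>UNIV. D [i] y * y $ i) * f y"
    by (subst sum_distrib_right) (simp add: mult_ac)
  finally show ?thesis by (simp add: euler1[OF y] power2_eq_square)
qed

end



lemma quad_scale: "(c *\<^sub>R v) \<bullet> (A *v (c *\<^sub>R v)) = c^2 * (v \<bullet> (A *v (v::real^'n)))"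
  by (simp add: matrix_vector_mult_scaleR power2_eq_square)

lemma exp_bound:
  fixes a s L :: real
  assumes a: "a > 0" and s: "\<bar>s\<bar> \<le> a * L" and L: "1 \<le> L"
  shows "exp (- ln (a / s)) \<le> L"
proof (cases "s = 0")
  case True then show ?thesis using L by simp
next
  case False
  then have "a / s \<noteq> 0" using a by simp
  then have "exp (ln (a / s)) = \<bar>a / s\<bar>" by (rule exp_ln_abs)
  then have "exp (- ln (a / s)) = \<bar>s\<bar> / a"
    using a False by (simp add: exp_minus abs_divide)
  also have "\<dots> \<le> L" using s a by (simp add: divide_le_eq mult.commute)
  finally show ?thesis .
qed

lemma main_bounds:
  fixes F :: "'p \<Rightarrow> real^'m \<Rightarrow> real"
  assumes fin: "finsler F" and bdd: "bdd_above (uniform_ratios F)" and Fy: "F x y = 1"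
  shows "1 \<le> uniform_constant F"
    and "det (fund_tensor (F x) y) > 0"
    and "\<bar>sigma_BH F x\<bar> \<le> sqrt (det (fund_tensor (F x) y)) * uniform_constant F ^ CARD('m)"
    and "\<bar>sigma_HT F x\<bar> \<le> sqrt (det (fund_tensor (F x) y)) * uniform_constant F ^ CARD('m)"
proof -
  define f where "f = F x"
  define G where "G = fund_tensor f"
  define \<Lambda> where "\<Lambda> = uniform_constant F"
  define q where "q z v = v \<bullet> (G z *v v)" for z v
  define n where "n = CARD('m)"
  have mn: "minkowski_norm f" using fin by (simp add: finsler_def f_def)
  then obtain D where D0: "D [] = f"
    and DD': "\<forall>ks. \<forall>y\<in>- {0}. (D ks has_derivative (\<lambda>h. \<Sum>i\<in>UNIV. D (i # ks) y * h $ i)) (at y)"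
    unfolding minkowski_norm_def smooth_on_R_def by blast
  have f0: "f 0 = 0" and fpos: "\<And>v. v \<noteq> 0 \<Longrightarrow> f v > 0"
    and hom: "\<And>v t. t > 0 \<Longrightarrow> f (t *\<^sub>R v) = t * f v"
    and pd: "\<And>z v. z \<noteq> 0 \<Longrightarrow> v \<noteq> 0 \<Longrightarrow> q z v > 0"
    using mn unfolding minkowski_norm_def q_def G_def by auto
  interpret mink f D
    by unfold_locales (use D0 DD' hom in auto)
  have fy: "f y = 1" using Fy by (simp add: f_def)
  have y0: "y \<noteq> 0" using fy f0 by auto
  have sym: "\<And>z. z \<noteq> 0 \<Longrightarrow> transpose (G z) = G z" by (simp add: G_def fund_sym)
  have qq: "\<And>v. v \<noteq> 0 \<Longrightarrow> q v v = (f v)^2" by (simp add: q_def G_def fund_quad)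
  have qscale: "q z (c *\<^sub>R v) = c^2 * q z v" for z c v unfolding q_def by (rule quad_scale)
  have q0: "q z 0 = 0" for z by (simp add: q_def)
  have ratio: "q X v \<le> \<Lambda> * q Z v" if X: "f X = 1" and Z: "f Z = 1" and v: "v \<noteq> 0" for X Z v
  proof -
    have fv: "f v > 0" using fpos v by simp
    define Y where "Y = (1 / f v) *\<^sub>R v"
    have fY: "f Y = 1" using fv by (simp add: Y_def hom)
    have Y0: "Y \<noteq> 0" using fY f0 by auto
    have Z0: "Z \<noteq> 0" using Z f0 by auto
    have qZY: "q Z Y > 0" using pd[OF Z0 Y0] .
    have "q X Y / q Z Y \<in> uniform_ratios F"
      unfolding uniform_ratios_def q_def G_def f_def
      using X Z fY unfolding f_def by blast
    then have le: "q X Y / q Z Y \<le> \<Lambda>"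
      unfolding \<Lambda>_def uniform_constant_def using bdd by (rule cSup_upper)
    have qXY: "q X Y = (1 / f v)^2 * q X v" and qZY': "q Z Y = (1 / f v)^2 * q Z v"
      by (simp_all add: Y_def qscale)
    have c: "(1 / f v)^2 > 0" using fv by simp
    have qZv: "q Z v > 0" using qZY qZY' c by (simp add: zero_less_mult_iff)
    have "q X v / q Z v \<le> \<Lambda>" using le c by (simp add: qXY qZY')
    then show ?thesis using qZv by (simp add: divide_le_eq)
  qed
  have L1: "1 \<le> \<Lambda>"
  proof -
    have "q y y / q y y \<in> uniform_ratios F"
      unfolding uniform_ratios_def q_def G_def f_def using Fy by blast
    moreover have "q y y = 1" using qq[OF y0] fy by simp
    ultimately have "1 \<in> uniform_ratios F" by simp
    then show ?thesis unfolding \<Lambda>_def uniform_constant_def using bdd by (rule cSup_upper)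
  qed
  then show "1 \<le> uniform_constant F" by (simp add: \<Lambda>_def)
  have Lpos: "\<Lambda> > 0" using L1 by simp
  have nrm: "f ((1 / f z) *\<^sub>R z) = 1 \<and> G ((1 / f z) *\<^sub>R z) = G z" if "z \<noteq> 0" for z
  proof -
    have fz: "f z > 0" using fpos that by simp
    show ?thesis using fz that by (simp add: hom G_def fund_hom)
  qed
  have P5: "(f v)^2 \<le> \<Lambda> * q y v" for v
  proof (cases "v = 0")
    case True then show ?thesis by (simp add: f0 q0)
  next
    case False
    have "(f v)^2 = q ((1 / f v) *\<^sub>R v) v" using qq[OF False] nrm[OF False] by (simp add: q_def)
    also have "\<dots> \<le> \<Lambda> * q y v" using ratio[OF conjunct1[OF nrm[OF False]] fy False] .
    finally show ?thesis .
  qed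
  have P6: "q z v \<le> \<Lambda> * (f v)^2" if z: "z \<noteq> 0" for z v
  proof (cases "v = 0")
    case True then show ?thesis by (simp add: f0 q0)
  next
    case False
    have "q z v = q ((1 / f z) *\<^sub>R z) v" using nrm[OF z] by (simp add: q_def)
    also have "\<dots> \<le> \<Lambda> * q ((1 / f v) *\<^sub>R v) v"
      using ratio[OF conjunct1[OF nrm[OF z]] conjunct1[OF nrm[OF False]] False] .
    also have "q ((1 / f v) *\<^sub>R v) v = (f v)^2" using qq[OF False] nrm[OF False] by (simp add: q_def)
    finally show ?thesis .
  qed
  have P7: "q z v \<le> \<Lambda> * q y v" if z: "z \<noteq> 0" for z v
  proof (cases "v = 0")
    case True then show ?thesis by (simp add: q0)
  next
    case False
    have "q z v = q ((1 / f z) *\<^sub>R z) v" using nrm[OF z] by (simp add: q_def)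
    also have "\<dots> \<le> \<Lambda> * q y v" using ratio[OF conjunct1[OF nrm[OF z]] fy False] .
    finally show ?thesis .
  qed
  define E where "E z c = {v. q z v < c}" for z c
  have ell: "det (G z) > 0 \<and> E z c \<in> sets borel \<and> bounded (E z c) \<and>
      measure lborel (E z c) = measure lborel (ball (0::real^'m) 1) * sqrt c ^ n / sqrt (det (G z))"
    if "z \<noteq> 0" "c > 0" for z c
  proof -
    have s: "transpose (G z) = G z" using sym that by simp
    have p: "\<And>v. v \<noteq> 0 \<Longrightarrow> v \<bullet> (G z *v v) > 0" using pd[OF that(1)] by (simp add: q_def)
    show ?thesis using ellipsoid[OF s p that(2)] by (simp add: E_def q_def n_def)
  qed
  have Efm: "E z c \<in> fmeasurable lborel" if "z \<noteq> 0" "c > 0" for z c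
    using ell[OF that] emeasure_bounded_finite by (auto simp: fmeasurable_def)
  have detpos: "det (G y) > 0" using ell[OF y0 zero_less_one] by simp
  then show "det (fund_tensor (F x) y) > 0" by (simp add: G_def f_def)
  define volB where "volB = measure lborel (ball (0::real^'m) 1)"
  have volB: "volB > 0" unfolding volB_def by (rule content_ball_pos) simp
  define K where "K = {v. f v < 1}"
  have K1: "E y (1 / \<Lambda>) \<subseteq> K"
  proof
    fix v assume "v \<in> E y (1 / \<Lambda>)"
    then have "q y v < 1 / \<Lambda>" by (simp add: E_def)
    then have "\<Lambda> * q y v < 1" using Lpos by (simp add: field_simps)
    then have "(f v)^2 < 1" using P5[of v] by linarith
    then have "\<bar>f v\<bar> < 1" by (simp add: abs_square_less_1)
    then show "v \<in> K" unfolding K_def by simp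
  qed
  have K2: "K \<subseteq> E z \<Lambda>" if z: "z \<noteq> 0" for z
  proof
    fix v assume "v \<in> K"
    then have fv: "f v < 1" by (simp add: K_def)
    have "0 \<le> f v" using fpos[of v] f0 by (cases "v = 0") auto
    then have "(f v)^2 < 1" using fv by (simp add: abs_square_less_1)
    then have "\<Lambda> * (f v)^2 < \<Lambda>" using Lpos by simp
    then show "v \<in> E z \<Lambda>" using P6[OF z, of v] by (simp add: E_def)
  qed
  have K3: "E y 1 \<subseteq> E z \<Lambda>" if z: "z \<noteq> 0" for z
  proof
    fix v assume "v \<in> E y 1"
    then have "\<Lambda> * q y v < \<Lambda>" using Lpos by (simp add: E_def)
    then show "v \<in> E z \<Lambda>" using P7[OF z, of v] by (simp add: E_def)
  qed
  have ic: "isCont f z" if "z \<noteq> 0" for z using has_derivative_continuous[OF df[OF that]] .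
  have contf: "continuous_on (- {0}) f"
    using ic by (intro continuous_at_imp_continuous_on) auto
  have "\<forall>B. open B \<longrightarrow> open (f -` B \<inter> - {0})"
    using continuous_on_open_vimage[OF open_N, of f] contf by simp
  then have Kopen: "open (f -` {..<1} \<inter> - {0})"
    using open_lessThan by blast
  have Keq: "K = (f -` {..<1} \<inter> - {0}) \<union> {0}" using f0 by (auto simp: K_def)
  have Kb: "K \<in> sets borel" unfolding Keq by (rule sets.Un[OF borel_open[OF Kopen] borel_closed[OF closed_singleton]])
  have Kfm: "K \<in> fmeasurable lborel"
  proof -
    have "emeasure lborel K \<le> emeasure lborel (E y \<Lambda>)"
      using K2[OF y0] Efm[OF y0 Lpos] by (intro emeasure_mono) (auto simp: fmeasurable_def)
    also have "\<dots> < \<infinity>" using Efm[OF y0 Lpos] by (simp add: fmeasurable_def)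
    finally show ?thesis using Kb by (simp add: fmeasurable_def)
  qed
  define V where "V = measure lborel K"
  have V1: "measure lborel (E y (1 / \<Lambda>)) \<le> V"
    unfolding V_def using K1 Kfm ell[OF y0, of "1 / \<Lambda>"] Lpos
    by (intro measure_mono_fmeasurable) auto
  have Vpos: "V > 0"
  proof -
    have "measure lborel (E y (1 / \<Lambda>)) = volB * sqrt (1 / \<Lambda>) ^ n / sqrt (det (G y))"
      using ell[OF y0, of "1 / \<Lambda>"] Lpos by (simp add: volB_def)
    moreover have "volB * sqrt (1 / \<Lambda>) ^ n / sqrt (det (G y)) > 0"
      using volB Lpos detpos by simp
    ultimately show ?thesis using V1 by linarith
  qed
  have s1: "1 \<le> sqrt \<Lambda>" using L1 by simp
  have "sqrt \<Lambda> * 1 \<le> sqrt \<Lambda> * sqrt \<Lambda>" using s1 by (intro mult_left_mono) auto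
  then have sLL: "sqrt \<Lambda> \<le> \<Lambda>" using Lpos by simp
  have sqL: "sqrt \<Lambda> ^ n \<le> \<Lambda> ^ n"
    using sLL Lpos by (intro power_mono) auto
  have Lp: "sqrt \<Lambda> ^ n > 0" using Lpos by simp
  have ss: "sqrt \<Lambda> * sqrt \<Lambda> = \<Lambda>" using Lpos by simp
  have Lsq: "sqrt \<Lambda> ^ n * sqrt \<Lambda> ^ n = \<Lambda> ^ n"
    by (metis ss power_mult_distrib)
  have sdet: "sqrt (det (G y)) > 0" using detpos by simp
  have "\<bar>sigma_BH F x\<bar> \<le> sqrt (det (G y)) * \<Lambda> ^ n"
  proof -
    have sBH: "sigma_BH F x = volB / V"
      by (simp add: sigma_BH_def volB_def V_def K_def f_def)
    define m where "m = volB * sqrt (1 / \<Lambda>) ^ n / sqrt (det (G y))"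
    have m: "measure lborel (E y (1 / \<Lambda>)) = m"
      using ell[OF y0, of "1 / \<Lambda>"] Lpos by (simp add: volB_def m_def)
    have mpos: "m > 0" using volB Lpos detpos by (simp add: m_def)
    have "volB / V \<le> volB / m"
      using V1 m mpos volB Vpos by (intro divide_left_mono) auto
    also have "volB / m = sqrt (det (G y)) * sqrt \<Lambda> ^ n"
      using volB Lpos sdet by (simp add: m_def real_sqrt_divide power_divide field_simps)
    also have "\<dots> \<le> sqrt (det (G y)) * \<Lambda> ^ n"
      using sqL sdet by (intro mult_left_mono) auto
    finally show ?thesis using volB Vpos by (simp add: sBH)
  qed
  then show "\<bar>sigma_BH F x\<bar> \<le> sqrt (det (fund_tensor (F x) y)) * uniform_constant F ^ CARD('m)"
    by (simp add: G_def f_def \<Lambda>_def n_def)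
  have pt: "det (G z) * V \<le> volB * \<Lambda> ^ n * sqrt (det (G y))" if z: "z \<noteq> 0" "z \<in> K" for z
  proof -
    have dz: "det (G z) > 0" using ell[OF z(1) Lpos] by simp
    have mz: "measure lborel (E z \<Lambda>) = volB * sqrt \<Lambda> ^ n / sqrt (det (G z))"
      using ell[OF z(1) Lpos] by (simp add: volB_def)
    have a: "V \<le> volB * sqrt \<Lambda> ^ n / sqrt (det (G z))"
      unfolding V_def mz[symmetric] using K2[OF z(1)] Kb Efm[OF z(1) Lpos]
      by (intro measure_mono_fmeasurable) auto
    have my: "measure lborel (E y 1) = volB / sqrt (det (G y))"
      using ell[OF y0 zero_less_one] by (simp add: volB_def)
    have "volB / sqrt (det (G y)) \<le> volB * sqrt \<Lambda> ^ n / sqrt (det (G z))"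
      unfolding my[symmetric] mz[symmetric] using K3[OF z(1)] ell[OF y0 zero_less_one] Efm[OF z(1) Lpos]
      by (intro measure_mono_fmeasurable) auto
    then have "volB * sqrt (det (G z)) \<le> volB * (sqrt \<Lambda> ^ n * sqrt (det (G y)))"
      using volB dz sdet by (simp add: field_simps)
    then have b: "sqrt (det (G z)) \<le> sqrt \<Lambda> ^ n * sqrt (det (G y))"
      using volB by simp
    have a': "sqrt (det (G z)) * V \<le> volB * sqrt \<Lambda> ^ n"
      using a dz by (simp add: field_simps)
    have sz: "sqrt (det (G z)) * sqrt (det (G z)) = det (G z)" using dz by simp
    have "det (G z) * V = sqrt (det (G z)) * (sqrt (det (G z)) * V)"
      by (metis sz mult.assoc)
    also have "\<dots> \<le> sqrt (det (G z)) * (volB * sqrt \<Lambda> ^ n)"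
      using a' dz by (intro mult_left_mono) auto
    also have "\<dots> \<le> (sqrt \<Lambda> ^ n * sqrt (det (G y))) * (volB * sqrt \<Lambda> ^ n)"
      using b volB Lp by (intro mult_right_mono) auto
    also have "\<dots> = volB * (sqrt \<Lambda> ^ n * sqrt \<Lambda> ^ n) * sqrt (det (G y))"
      by (simp add: mult_ac)
    finally show ?thesis by (simp add: Lsq)
  qed
  define C where "C = volB * \<Lambda> ^ n * sqrt (det (G y)) / V"
  define g where "g z = (if z = 0 then 0 else det (G z))" for z
  have gC: "g z \<le> C" if "z \<in> K" for z
  proof (cases "z = 0")
    case True then show ?thesis using volB Lpos sdet Vpos by (simp add: g_def C_def)
  next
    case False then show ?thesis using pt[OF False that] Vpos by (simp add: g_def C_def field_simps)
  qed
  have g0: "0 \<le> g z" for z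
    using ell[of z 1] by (cases "z = 0") (auto simp: g_def)
  have Kbd: "bounded K" using K2[OF y0] ell[OF y0 Lpos] bounded_subset by blast
  have "K \<in> sets lebesgue" using sets_completionI_sets[of K lborel] Kb by simp
  then have Kl: "K \<in> lmeasurable" using Kbd by (intro bounded_set_imp_lmeasurable) auto
  have intK: "integral K (\<lambda>z. det (G z)) = integral K g"
    by (rule integral_spike[of "{0}"]) (auto simp: g_def)
  have I: "0 \<le> integral K g \<and> integral K g \<le> volB * \<Lambda> ^ n * sqrt (det (G y))"
  proof (cases "g integrable_on K")
    case True
    have "integral K g \<le> integral K (\<lambda>z. C)"
      using True integrable_on_const[OF Kl] gC by (intro integral_le) auto
    also have "integral K (\<lambda>z. C) = C * measure lebesgue K"
      using integral_mult_right[of K C "\<lambda>z. 1"] lmeasure_integral[OF Kl] by simp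
    also have "measure lebesgue K = V" using Kb by (simp add: V_def)
    also have "C * V = volB * \<Lambda> ^ n * sqrt (det (G y))" using Vpos by (simp add: C_def)
    finally show ?thesis using integral_nonneg[OF True g0] by simp
  next
    case False
    then show ?thesis using volB Lpos sdet by (simp add: not_integrable_integral)
  qed
  have "sigma_HT F x = (1 / volB) * integral K (\<lambda>z. det (G z))"
    by (simp add: sigma_HT_def volB_def K_def G_def f_def)
  then have sHT: "sigma_HT F x = integral K g / volB" by (simp add: intK)
  have "integral K g / volB \<le> sqrt (det (G y)) * \<Lambda> ^ n"
    using I volB by (simp add: divide_le_eq mult_ac)
  moreover have "0 \<le> integral K g / volB" using I volB by simp
  ultimately have "\<bar>sigma_HT F x\<bar> \<le> sqrt (det (G y)) * \<Lambda> ^ n"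
    by (simp add: sHT)
  then show "\<bar>sigma_HT F x\<bar> \<le> sqrt (det (fund_tensor (F x) y)) * uniform_constant F ^ CARD('m)"
    by (simp add: G_def f_def \<Lambda>_def n_def)
qed

theorem proposition8p1:
  fixes F :: "'p \<Rightarrow> real^'m \<Rightarrow> real" and \<sigma> :: "'p \<Rightarrow> real"
    and x :: 'p and y :: "real^'m"
  assumes "finsler F"
    and "bdd_above (uniform_ratios F)"
    and "\<sigma> = sigma_BH F \<or> \<sigma> = sigma_HT F"
    and "F x y = 1"
  shows "exp (- distortion \<sigma> F x y) \<le> uniform_constant F ^ CARD('m)"
proof -
  note mb = main_bounds[OF assms(1,2,4)]
  have s: "\<bar>\<sigma> x\<bar> \<le> sqrt (det (fund_tensor (F x) y)) * uniform_constant F ^ CARD('m)"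
    using assms(3) mb(3,4) by auto
  have L: "1 \<le> uniform_constant F ^ CARD('m)" using mb(1) by simp
  show ?thesis unfolding distortion_def
    by (rule exp_bound[OF _ s L]) (use mb(2) in simp)
qed

end
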